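(* In the setting below, if $p,q\in X$ satisfy $S_p\cap S_q=\emptyset$, then at most one of $p,q$ has a strange index.
   Context: Setting: $E=\{e_0,\dots,e_n\}\subset\mathbb R^n$ is the vertex set of an $n$-simplex with $e_0+\cdots+e_n=0$, and $X\subset\mathbb R^n\setminus\{0\}$ is a finite set with $E\subseteq X$, no element of $X$ a positive multiple of another, such that every $n+1$ points of $X$ are in good position. (A finite set $A$ is in conical position if $0\notin\operatorname{conv}A$ and no point of $A$ lies in the positive hull—set of nonnegative linear combinations—of the other points; it is in good position otherwise.) For $p\in X$, the support $S_p$ is the minimal subset of $E$ whose positive hull contains $p$; then $p=\sum_{e_i\in S_p}\lambda_ie_i$ uniquely with all $\lambda_i>0$. Convention: each $p\in X$ is replaced by the positive multiple for which $\min_{e_i\in S_p}\lambda_i=1$. An element $e_j\in S_p$ is a strange index of $p$ if $\lambda_j>1$ (under these hypotheses there is at most one). *)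

theory Defs
  imports "HOL-Analysis.Analysis"
begin

definition pos_hull :: "'a::real_vector set \<Rightarrow> 'a set" where
  "pos_hull A = {y. \<exists>c. (\<forall>a\<in>A. c a \<ge> 0) \<and> y = (\<Sum>a\<in>A. c a *\<^sub>R a)}"

definition conical_position :: "'a::real_vector set \<Rightarrow> bool" where
  "conical_position A \<longleftrightarrow> 0 \<notin> convex hull A \<and> (\<forall>a\<in>A. a \<notin> pos_hull (A - {a}))"

definition good_position :: "'a::real_vector set \<Rightarrow> bool" where
  "good_position A \<longleftrightarrow> \<not> conical_position A"

definition support :: "'a::real_vector set \<Rightarrow> 'a \<Rightarrow> 'a set" where
  "support E p = (THE S. S \<subseteq> E \<and> p \<in> pos_hull S \<and> (\<forall>T. T \<subset> S \<longrightarrow> p \<notin> pos_hull T))"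

definition supp_coeff :: "'a::real_vector set \<Rightarrow> 'a \<Rightarrow> 'a \<Rightarrow> real" where
  "supp_coeff E p = (THE l. (\<forall>v\<in>support E p. l v > 0) \<and> (\<forall>v. v \<notin> support E p \<longrightarrow> l v = 0)
       \<and> p = (\<Sum>v\<in>support E p. l v *\<^sub>R v))"

definition norm_coeff :: "'a::real_vector set \<Rightarrow> 'a \<Rightarrow> 'a \<Rightarrow> real" where
  "norm_coeff E p v = supp_coeff E p v / Min (supp_coeff E p ` support E p)"

definition strange_index :: "'a::real_vector set \<Rightarrow> 'a \<Rightarrow> 'a \<Rightarrow> bool" where
  "strange_index E p v \<longleftrightarrow> v \<in> support E p \<and> norm_coeff E p v > 1"

definition has_strange_index :: "'a::real_vector set \<Rightarrow> 'a \<Rightarrow> bool" where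
  "has_strange_index E p \<longleftrightarrow> (\<exists>v. strange_index E p v)"

end

theory Submission
  imports Defs
begin

locale sctx =
  fixes E :: "'a::euclidean_space set"
  assumes ind: "\<not> affine_dependent E" and finE: "finite E" and s0: "\<Sum> E = 0"
    and full: "affine hull E = UNIV"
begin

lemma coeff_const:
  assumes eq: "(\<Sum>v\<in>E. f v *\<^sub>R v) = (\<Sum>v\<in>E. g v *\<^sub>R v)" and u: "u \<in> E" and w: "w \<in> E"
  shows "f u - g u = f w - g w"
proof -
  define c where "c v = f v - g v" for v
  have c0: "(\<Sum>v\<in>E. c v *\<^sub>R v) = 0"
    using eq by (simp add: c_def scaleR_diff_left sum_subtractf)
  define m where "m = sum c E / real (card E)"
  have cp: "card E > 0" using u finE card_gt_0_iff by blast
  define d where "d v = c v - m" for v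
  have "sum d E = sum c E - real (card E) * m" by (simp add: d_def sum_subtractf)
  hence sd: "sum d E = 0" using cp by (simp add: m_def)
  have "(\<Sum>v\<in>E. d v *\<^sub>R v) = (\<Sum>v\<in>E. c v *\<^sub>R v) - m *\<^sub>R (\<Sum>v\<in>E. v)"
    by (simp add: d_def scaleR_diff_left sum_subtractf scaleR_sum_right)
  also have "\<dots> = 0" using c0 s0 by simp
  finally have "(\<Sum>v\<in>E. d v *\<^sub>R v) = 0" .
  with sd ind finE have "\<forall>v\<in>E. d v = 0"
    using affine_dependent_explicit_finite by blast
  thus ?thesis using u w by (auto simp: d_def c_def)
qed

lemma in_pos_hull_E: "x \<in> pos_hull E"
proof -
  have "x \<in> affine hull E" using full by simp
  then obtain u where u: "sum u E = 1" "(\<Sum>v\<in>E. u v *\<^sub>R v) = x"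
    using affine_hull_finite[OF finE] by auto
  have ne: "E \<noteq> {}" using u(1) by auto
  define m where "m = Min (u ` E)"
  have "\<forall>v\<in>E. u v - m \<ge> 0" using finE by (auto simp: m_def)
  moreover have "(\<Sum>v\<in>E. (u v - m) *\<^sub>R v) = x"
    using u s0 by (simp add: scaleR_diff_left sum_subtractf scaleR_sum_right[symmetric])
  ultimately show ?thesis unfolding pos_hull_def by (auto intro!: exI[of _ "\<lambda>v. u v - m"])
qed

definition minS where "minS x S \<longleftrightarrow> S \<subseteq> E \<and> x \<in> pos_hull S \<and> (\<forall>T. T \<subset> S \<longrightarrow> x \<notin> pos_hull T)"

lemma sum_extend:
  assumes "S \<subseteq> E"
  shows "(\<Sum>v\<in>E. (if v \<in> S then c v else 0) *\<^sub>R v) = (\<Sum>v\<in>S. c v *\<^sub>R v)"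
proof -
  have "(\<Sum>v\<in>E. (if v \<in> S then c v else 0) *\<^sub>R v) = (\<Sum>v\<in>E. if v \<in> S then c v *\<^sub>R v else 0)"
    by (rule sum.cong) auto
  also have "\<dots> = (\<Sum>v\<in>E \<inter> S. c v *\<^sub>R v)" using finE by (simp add: sum.inter_restrict)
  also have "E \<inter> S = S" using assms by auto
  finally show ?thesis .
qed

lemma min_pos:
  assumes "minS x S"
  shows "\<exists>c. (\<forall>v\<in>S. c v > 0) \<and> x = (\<Sum>v\<in>S. c v *\<^sub>R v)"
proof -
  have SE: "S \<subseteq> E" and fS: "finite S" using assms finE by (auto simp: minS_def intro: finite_subset)
  obtain c where c: "\<forall>a\<in>S. c a \<ge> 0" "x = (\<Sum>a\<in>S. c a *\<^sub>R a)"
    using assms by (auto simp: minS_def pos_hull_def)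
  have "\<forall>v\<in>S. c v > 0"
  proof (rule ccontr)
    assume "\<not> (\<forall>v\<in>S. c v > 0)"
    then obtain a where a: "a \<in> S" "c a = 0" using c(1) by force
    have "x = (\<Sum>v\<in>S - {a}. c v *\<^sub>R v)"
      using c(2) a fS by (simp add: sum.remove)
    hence "x \<in> pos_hull (S - {a})" using c(1) unfolding pos_hull_def by auto
    moreover have "S - {a} \<subset> S" using a by auto
    ultimately show False using assms by (auto simp: minS_def)
  qed
  with c show ?thesis by blast
qed

lemma min_ne_E:
  assumes "minS x S" "E \<noteq> {}"
  shows "S \<noteq> E"
proof
  assume SE: "S = E"
  obtain c where c: "\<forall>v\<in>S. c v > 0" "x = (\<Sum>v\<in>S. c v *\<^sub>R v)" using min_pos[OF assms(1)] by blast
  define m where "m = Min (c ` E)"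
  have "m \<in> c ` E" using Min_in[of "c ` E"] finE assms(2) by (simp add: m_def)
  then obtain a where a: "a \<in> E" "c a = m" by auto
  have ge: "\<forall>v\<in>E. c v - m \<ge> 0" using finE by (auto simp: m_def)
  have "x = (\<Sum>v\<in>E. (c v - m) *\<^sub>R v)"
    using c SE s0 by (simp add: scaleR_diff_left sum_subtractf scaleR_sum_right[symmetric])
  also have "\<dots> = (\<Sum>v\<in>E - {a}. (c v - m) *\<^sub>R v)"
    using a finE by (simp add: sum.remove)
  finally have "x \<in> pos_hull (E - {a})" using ge unfolding pos_hull_def
    by (intro CollectI exI[of _ "\<lambda>v. c v - m"]) auto
  moreover have "E - {a} \<subset> S" using a SE by auto
  ultimately show False using assms by (auto simp: minS_def)
qed

lemma min_exists: "\<exists>S. minS x S"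
proof -
  obtain S0 where S0: "S0 \<subseteq> E \<and> x \<in> pos_hull S0" using in_pos_hull_E by blast
  obtain S where S: "S \<subseteq> E \<and> x \<in> pos_hull S" and least: "\<And>T. T \<subseteq> E \<and> x \<in> pos_hull T \<Longrightarrow> card S \<le> card T"
    using ex_has_least_nat[of "\<lambda>S. S \<subseteq> E \<and> x \<in> pos_hull S" S0 card] S0 by blast
  have "\<forall>T. T \<subset> S \<longrightarrow> x \<notin> pos_hull T"
  proof (intro allI impI notI)
    fix T assume T: "T \<subset> S" "x \<in> pos_hull T"
    have "finite S" using S finE finite_subset by blast
    hence "card T < card S" using T psubset_card_mono by blast
    moreover have "card S \<le> card T" using least T S by blast
    ultimately show False by simp
  qed
  thus ?thesis using S by (auto simp: minS_def)
qed

lemma E_ne: "E \<noteq> {}" using full by auto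

lemma sum_zero_off:
  assumes "S \<subseteq> E" "\<forall>v. v \<notin> S \<longrightarrow> l v = 0"
  shows "(\<Sum>v\<in>E. l v *\<^sub>R v) = (\<Sum>v\<in>S. l v *\<^sub>R v)"
  by (rule sum.mono_neutral_right) (use assms finE in auto)

lemma min_unique:
  assumes m1: "minS x S1" and m2: "minS x S2"
  shows "S1 = S2"
proof -
  obtain c1 where c1: "\<forall>v\<in>S1. c1 v > 0" "x = (\<Sum>v\<in>S1. c1 v *\<^sub>R v)" using min_pos[OF m1] by blast
  obtain c2 where c2: "\<forall>v\<in>S2. c2 v > 0" "x = (\<Sum>v\<in>S2. c2 v *\<^sub>R v)" using min_pos[OF m2] by blast
  have S1E: "S1 \<subseteq> E" and S2E: "S2 \<subseteq> E" using m1 m2 by (auto simp: minS_def)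
  define f where "f v = (if v \<in> S1 then c1 v else 0)" for v
  define g where "g v = (if v \<in> S2 then c2 v else 0)" for v
  have eq: "(\<Sum>v\<in>E. f v *\<^sub>R v) = (\<Sum>v\<in>E. g v *\<^sub>R v)"
    using sum_extend[OF S1E, of c1] sum_extend[OF S2E, of c2] c1 c2 by (simp add: f_def g_def)
  have "S1 \<subseteq> S2 \<or> S2 \<subseteq> S1"
  proof (rule ccontr)
    assume "\<not> (S1 \<subseteq> S2 \<or> S2 \<subseteq> S1)"
    then obtain a b where ab: "a \<in> S1" "a \<notin> S2" "b \<in> S2" "b \<notin> S1" by blast
    have "f a - g a = f b - g b" using coeff_const[OF eq] ab S1E S2E by blast
    moreover have "f a - g a > 0" using ab c1 by (simp add: f_def g_def)
    moreover have "f b - g b < 0" using ab c2 by (simp add: f_def g_def)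
    ultimately show False by simp
  qed
  thus ?thesis using m1 m2 unfolding minS_def by blast
qed

lemma support_min: "minS x (support E x)"
proof -
  have "\<exists>!S. minS x S" using min_exists min_unique by blast
  hence "minS x (THE S. minS x S)" by (rule theI')
  thus ?thesis unfolding support_def minS_def .
qed

lemma coeff_ex1:
  "\<exists>!l. (\<forall>v\<in>support E x. l v > 0) \<and> (\<forall>v. v \<notin> support E x \<longrightarrow> l v = 0)
       \<and> x = (\<Sum>v\<in>support E x. l v *\<^sub>R v)"
proof -
  let ?S = "support E x"
  have m: "minS x ?S" by (rule support_min)
  have SE: "?S \<subseteq> E" using m by (auto simp: minS_def)
  have SnE: "?S \<noteq> E" using min_ne_E[OF m E_ne] .
  obtain w where w: "w \<in> E" "w \<notin> ?S" using SE SnE by blast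
  obtain c where c: "\<forall>v\<in>?S. c v > 0" "x = (\<Sum>v\<in>?S. c v *\<^sub>R v)" using min_pos[OF m] by blast
  define l where "l v = (if v \<in> ?S then c v else 0)" for v
  have ex: "(\<forall>v\<in>?S. l v > 0) \<and> (\<forall>v. v \<notin> ?S \<longrightarrow> l v = 0) \<and> x = (\<Sum>v\<in>?S. l v *\<^sub>R v)"
    using c by (auto simp: l_def intro!: sum.cong)
  show ?thesis
  proof (rule ex1I[of _ l])
    show "(\<forall>v\<in>?S. l v > 0) \<and> (\<forall>v. v \<notin> ?S \<longrightarrow> l v = 0) \<and> x = (\<Sum>v\<in>?S. l v *\<^sub>R v)" by (rule ex)
  next
    fix l2 assume l2: "(\<forall>v\<in>?S. l2 v > 0) \<and> (\<forall>v. v \<notin> ?S \<longrightarrow> l2 v = 0) \<and> x = (\<Sum>v\<in>?S. l2 v *\<^sub>R v)"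
    have eq: "(\<Sum>v\<in>E. l2 v *\<^sub>R v) = (\<Sum>v\<in>E. l v *\<^sub>R v)"
      using sum_zero_off[OF SE, of l2] sum_zero_off[OF SE, of l] l2 ex by simp
    show "l2 = l"
    proof
      fix u show "l2 u = l u"
      proof (cases "u \<in> E")
        case True
        have "l2 u - l u = l2 w - l w" using coeff_const[OF eq True w(1)] .
        thus ?thesis using w l2 ex by simp
      next
        case False
        hence "u \<notin> ?S" using SE by blast
        thus ?thesis using l2 ex by metis
      qed
    qed
  qed
qed

lemma coeff_props:
  fixes x :: 'a
  defines "S \<equiv> support E x" and "l \<equiv> supp_coeff E x"
  shows "S \<subseteq> E" "S \<noteq> E" "finite S" "\<forall>v\<in>S. l v > 0" "\<forall>v. v \<notin> S \<longrightarrow> l v = 0"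
    "x = (\<Sum>v\<in>E. l v *\<^sub>R v)"
proof -
  have m: "minS x S" unfolding S_def by (rule support_min)
  show SE: "S \<subseteq> E" using m by (auto simp: minS_def)
  show "S \<noteq> E" using min_ne_E[OF m E_ne] .
  show "finite S" using SE finE finite_subset by blast
  have P: "(\<forall>v\<in>S. l v > 0) \<and> (\<forall>v. v \<notin> S \<longrightarrow> l v = 0) \<and> x = (\<Sum>v\<in>S. l v *\<^sub>R v)"
    unfolding S_def l_def supp_coeff_def by (rule theI'[OF coeff_ex1])
  thus "\<forall>v\<in>S. l v > 0" "\<forall>v. v \<notin> S \<longrightarrow> l v = 0" by auto
  show "x = (\<Sum>v\<in>E. l v *\<^sub>R v)" using P sum_zero_off[OF SE, of l] by simp
qed

lemma strange_facts:
  assumes "has_strange_index E x"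
  shows "\<exists>i j. i \<in> support E x \<and> j \<in> support E x \<and> 0 < supp_coeff E x i \<and> supp_coeff E x i < supp_coeff E x j"
proof -
  let ?S = "support E x" and ?l = "supp_coeff E x"
  obtain j where j: "j \<in> ?S" "norm_coeff E x j > 1" using assms by (auto simp: has_strange_index_def strange_index_def)
  have fS: "finite ?S" and pos: "\<forall>v\<in>?S. ?l v > 0" using coeff_props(3)[of x] coeff_props(4)[of x] by blast+
  have "Min (?l ` ?S) \<in> ?l ` ?S" using fS j(1) by (intro Min_in) auto
  then obtain i where i: "i \<in> ?S" "?l i = Min (?l ` ?S)" by auto
  have ip: "?l i > 0" using pos i by auto
  have "?l j / ?l i > 1" using j(2) i by (simp add: norm_coeff_def)
  hence "?l i < ?l j" using ip by (simp add: less_divide_eq)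
  thus ?thesis using i j ip by blast
qed

lemma strange_notin:
  assumes "has_strange_index E x"
  shows "x \<notin> E"
proof
  assume xE: "x \<in> E"
  let ?S = "support E x" and ?l = "supp_coeff E x"
  obtain i j where ij: "i \<in> ?S" "j \<in> ?S" "0 < ?l i" "?l i < ?l j" using strange_facts[OF assms] by blast
  have SE: "?S \<subseteq> E" "?S \<noteq> E" and z: "\<forall>v. v \<notin> ?S \<longrightarrow> ?l v = 0" and rep: "x = (\<Sum>v\<in>E. ?l v *\<^sub>R v)"
    using coeff_props(1)[of x] coeff_props(2)[of x] coeff_props(5)[of x] coeff_props(6)[of x] by blast+
  obtain w where w: "w \<in> E" "w \<notin> ?S" using SE by blast
  define g where "g v = (if v = x then 1 else 0::real)" for v
  have "(\<Sum>v\<in>E. g v *\<^sub>R v) = (\<Sum>v\<in>E. if v = x then v else 0)" by (rule sum.cong) (auto simp: g_def)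
  also have "\<dots> = x" using xE finE by simp
  finally have eq: "(\<Sum>v\<in>E. ?l v *\<^sub>R v) = (\<Sum>v\<in>E. g v *\<^sub>R v)" using rep by simp
  have e1: "?l i - g i = ?l j - g j" using coeff_const[OF eq] ij SE by blast
  have e2: "?l i - g i = ?l w - g w" using coeff_const[OF eq] ij SE w by blast
  have "w \<noteq> j" "w \<noteq> i" using w ij by auto
  thus False using e1 e2 ij z w by (auto simp: g_def split: if_splits)
qed

lemma main:
  assumes EX: "E \<subseteq> X" and good: "\<forall>A. A \<subseteq> X \<and> card A = card E \<longrightarrow> good_position A"
    and pX: "p \<in> X" and qX: "q \<in> X"
    and disj: "support E p \<inter> support E q = {}"
    and hp: "has_strange_index E p" and hq: "has_strange_index E q"
  shows False
proof -
  let ?Sp = "support E p" and ?la = "supp_coeff E p"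
  let ?Sq = "support E q" and ?mu = "supp_coeff E q"
  obtain i j where ij: "i \<in> ?Sp" "j \<in> ?Sp" "0 < ?la i" "?la i < ?la j" using strange_facts[OF hp] by blast
  obtain l k where lk: "l \<in> ?Sq" "k \<in> ?Sq" "0 < ?mu l" "?mu l < ?mu k" using strange_facts[OF hq] by blast
  have SpE: "?Sp \<subseteq> E" and zp: "\<forall>v. v \<notin> ?Sp \<longrightarrow> ?la v = 0" and repp: "p = (\<Sum>v\<in>E. ?la v *\<^sub>R v)"
    using coeff_props(1)[of p] coeff_props(5)[of p] coeff_props(6)[of p] by blast+
  have SqE: "?Sq \<subseteq> E" and zq: "\<forall>v. v \<notin> ?Sq \<longrightarrow> ?mu v = 0" and repq: "q = (\<Sum>v\<in>E. ?mu v *\<^sub>R v)"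
    using coeff_props(1)[of q] coeff_props(5)[of q] coeff_props(6)[of q] by blast+
  have iq: "i \<notin> ?Sq" "j \<notin> ?Sq" and lp: "l \<notin> ?Sp" "k \<notin> ?Sp" using disj ij lk by auto
  have mui: "?mu i = 0" "?mu j = 0" using zq iq by auto
  have lal: "?la l = 0" "?la k = 0" using zp lp by auto
  have iE: "i \<in> E" "j \<in> E" "l \<in> E" "k \<in> E" using ij lk SpE SqE by auto
  have dist: "i \<noteq> l" "j \<noteq> i" "j \<noteq> l" "k \<noteq> i" "k \<noteq> l" "j \<noteq> k"
    using ij lk iq lp by auto
  define E' where "E' = E - {i, l}"
  define A where "A = insert p (insert q E')"
  have pE: "p \<notin> E" using strange_notin[OF hp] .
  have qE: "q \<notin> E" using strange_notin[OF hq] .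
  have pq: "p \<noteq> q" using disj ij by auto
  have E'E: "E' \<subseteq> E" by (auto simp: E'_def)
  have fE': "finite E'" using finE by (simp add: E'_def)
  have pnA: "p \<notin> insert q E'" using pE pq E'E by auto
  have qnA: "q \<notin> E'" using qE E'E by auto
  have fA: "finite A" using fE' by (simp add: A_def)
  have "card E' = card E - 2" using iE dist finE by (simp add: E'_def card_Diff_subset)
  moreover have "card E \<ge> 2"
  proof -
    have "{i, l} \<subseteq> E" using iE by auto
    hence "card {i, l} \<le> card E" using finE card_mono by blast
    thus ?thesis using dist by simp
  qed
  ultimately have cA: "card A = card E" using fE' pnA qnA by (simp add: A_def)
  have AX: "A \<subseteq> X" using EX pX qX E'E by (auto simp: A_def)
  have ncon: "\<not> conical_position A" using good AX cA by (auto simp: good_position_def)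
  have jE': "j \<in> E'" "k \<in> E'" using iE dist by (auto simp: E'_def)
  have rel: "\<forall>s\<in>E. (if s \<in> E' then d s else 0) + d p * ?la s + d q * ?mu s = d p * ?la i"
    if d0: "(\<Sum>a\<in>A. d a *\<^sub>R a) = 0" for d
  proof
    fix s assume sE: "s \<in> E"
    define \<gamma> where "\<gamma> v = (if v \<in> E' then d v else 0) + d p * ?la v + d q * ?mu v" for v
    have "(\<Sum>a\<in>A. d a *\<^sub>R a) = d p *\<^sub>R p + (d q *\<^sub>R q + (\<Sum>a\<in>E'. d a *\<^sub>R a))"
      using fE' pnA qnA by (simp add: A_def)
    also have "(\<Sum>a\<in>E'. d a *\<^sub>R a) = (\<Sum>v\<in>E. (if v \<in> E' then d v else 0) *\<^sub>R v)"
      using sum_extend[OF E'E, of d] by simp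
    also have "d p *\<^sub>R p = (\<Sum>v\<in>E. (d p * ?la v) *\<^sub>R v)"
      by (subst repp) (simp add: scaleR_sum_right)
    also have "d q *\<^sub>R q = (\<Sum>v\<in>E. (d q * ?mu v) *\<^sub>R v)"
      by (subst repq) (simp add: scaleR_sum_right)
    finally have "(\<Sum>v\<in>E. \<gamma> v *\<^sub>R v) = (\<Sum>v\<in>E. (0::real) *\<^sub>R v)"
      using d0 by (simp add: \<gamma>_def scaleR_add_left sum.distrib algebra_simps)
    from coeff_const[OF this sE iE(1)] have "\<gamma> s = \<gamma> i" by simp
    moreover have "\<gamma> i = d p * ?la i" using mui by (simp add: \<gamma>_def E'_def)
    ultimately show "(if s \<in> E' then d s else 0) + d p * ?la s + d q * ?mu s = d p * ?la i"
      by (simp add: \<gamma>_def)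
  qed
  have facts: "d p * ?la i = d q * ?mu l \<and> d p * ?la i = d j + d p * ?la j \<and> d p * ?la i = d k + d q * ?mu k
      \<and> (\<forall>s\<in>E'. d s + d p * ?la s + d q * ?mu s = d p * ?la i)"
    if d0: "(\<Sum>a\<in>A. d a *\<^sub>R a) = 0" for d
  proof -
    have r: "\<forall>s\<in>E. (if s \<in> E' then d s else 0) + d p * ?la s + d q * ?mu s = d p * ?la i" using rel[OF d0] .
    have "l \<notin> E'" by (simp add: E'_def)
    have r1: "(if l \<in> E' then d l else 0) + d p * ?la l + d q * ?mu l = d p * ?la i" using r iE by blast
    have r2: "(if j \<in> E' then d j else 0) + d p * ?la j + d q * ?mu j = d p * ?la i" using r iE by blast
    have r3: "(if k \<in> E' then d k else 0) + d p * ?la k + d q * ?mu k = d p * ?la i" using r iE by blast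
    have r4: "\<forall>s\<in>E'. d s + d p * ?la s + d q * ?mu s = d p * ?la i"
    proof
      fix s assume "s \<in> E'"
      moreover hence "s \<in> E" using E'E by blast
      ultimately show "d s + d p * ?la s + d q * ?mu s = d p * ?la i" using r by force
    qed
    show ?thesis using r1 r2 r3 r4 \<open>l \<notin> E'\<close> jE' mui lal by simp
  qed
  show False
  proof (cases "0 \<in> convex hull A")
    case True
    then obtain d where d: "\<forall>x\<in>A. 0 \<le> d x" "sum d A = 1" "(\<Sum>x\<in>A. d x *\<^sub>R x) = 0"
      using convex_hull_finite[OF fA] by auto
    note F = facts[OF d(3)]
    have dge: "d p \<ge> 0" "d q \<ge> 0" "d j \<ge> 0" using d(1) jE' by (auto simp: A_def)
    have "d p = 0"
    proof (rule ccontr)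
      assume "d p \<noteq> 0" hence "d p > 0" using dge by simp
      hence "d p * ?la i < d p * ?la j" using ij by simp
      thus False using F dge by linarith
    qed
    hence "d q * ?mu l = 0" using F by simp
    hence "d q = 0" using lk by simp
    have "\<forall>s\<in>E'. d s = 0" using F \<open>d p = 0\<close> \<open>d q = 0\<close> by simp
    hence "sum d A = 0" using \<open>d p = 0\<close> \<open>d q = 0\<close> fE' pnA qnA by (simp add: A_def)
    thus False using d(2) by simp
  next
    case False
    with ncon obtain a where aA: "a \<in> A" and ah: "a \<in> pos_hull (A - {a})"
      by (auto simp: conical_position_def)
    then obtain c where c: "\<forall>x\<in>A - {a}. c x \<ge> 0" "a = (\<Sum>x\<in>A - {a}. c x *\<^sub>R x)"
      by (auto simp: pos_hull_def)
    define d where "d x = (if x = a then -1 else c x)" for x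
    have "(\<Sum>x\<in>A. d x *\<^sub>R x) = d a *\<^sub>R a + (\<Sum>x\<in>A - {a}. d x *\<^sub>R x)"
      using fA aA by (simp add: sum.remove)
    also have "(\<Sum>x\<in>A - {a}. d x *\<^sub>R x) = (\<Sum>x\<in>A - {a}. c x *\<^sub>R x)"
      by (rule sum.cong) (auto simp: d_def)
    finally have d0: "(\<Sum>x\<in>A. d x *\<^sub>R x) = 0" using c(2) by (simp add: d_def)
    note F = facts[OF d0]
    have dge: "\<forall>x\<in>A. x \<noteq> a \<longrightarrow> d x \<ge> 0" using c(1) by (auto simp: d_def)
    have pA: "p \<in> A" "q \<in> A" "j \<in> A" "k \<in> A" using jE' by (auto simp: A_def)
    show False
    proof (cases "a = p")
      case True
      hence "d p = -1" by (simp add: d_def)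
      moreover have "q \<noteq> a" using pq True by simp
      hence "d q \<ge> 0" using dge pA(2) by blast
      hence "d q * ?mu l \<ge> 0" using lk by simp
      moreover have "d p * ?la i = d q * ?mu l" using F by blast
      ultimately show False using ij by simp
    next
      case ap: False
      show False
      proof (cases "a = q")
        case True
        hence "d q = -1" by (simp add: d_def)
        moreover have "p \<noteq> a" using pq True by simp
        hence "d p \<ge> 0" using dge pA(1) by blast
        hence "d p * ?la i \<ge> 0" using ij by simp
        moreover have "d p * ?la i = d q * ?mu l" using F by blast
        ultimately show False using lk by simp
      next
        case aq: False
        have aE': "a \<in> E'" using aA ap aq by (auto simp: A_def)
        have dp: "d p \<ge> 0" "d q \<ge> 0" using dge pA ap aq by auto
        have da: "d a = -1" by (simp add: d_def)
        have Fa: "d a + d p * ?la a + d q * ?mu a = d p * ?la i" using F aE' by blast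
        show False
        proof (cases "a = j")
          case False
          hence "d j \<ge> 0" using dge pA by auto
          have "d p = 0"
          proof (rule ccontr)
            assume "d p \<noteq> 0" hence "d p > 0" using dp by simp
            hence "d p * ?la i < d p * ?la j" using ij by simp
            thus False using F \<open>d j \<ge> 0\<close> by linarith
          qed
          hence "d q = 0" using F lk by simp
          thus False using Fa da \<open>d p = 0\<close> by simp
        next
          case True
          hence "a \<noteq> k" using dist by auto
          hence "d k \<ge> 0" using dge pA by auto
          have "d q = 0"
          proof (rule ccontr)
            assume "d q \<noteq> 0" hence "d q > 0" using dp by simp
            hence "d q * ?mu l < d q * ?mu k" using lk by simp
            thus False using F \<open>d k \<ge> 0\<close> by linarith
          qed
          hence "d p = 0" using F ij by simp
          thus False using Fa da \<open>d q = 0\<close> by simp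
        qed
      qed
    qed
  qed
qed

end

theorem proposition6p4:
  fixes E X :: "'a::euclidean_space set" and p q :: 'a
  assumes simplex: "\<not> affine_dependent E" "card E = DIM('a) + 1"
    and sum0: "\<Sum> E = 0"
    and finX: "finite X" and X0: "0 \<notin> X" and EX: "E \<subseteq> X"
    and nomult: "\<forall>x\<in>X. \<forall>y\<in>X. \<forall>c::real. c > 0 \<and> y = c *\<^sub>R x \<longrightarrow> y = x"
    and good: "\<forall>A. A \<subseteq> X \<and> card A = DIM('a) + 1 \<longrightarrow> good_position A"
    and pX: "p \<in> X" and qX: "q \<in> X"
    and disj: "support E p \<inter> support E q = {}"
  shows "\<not> (has_strange_index E p \<and> has_strange_index E q)"
proof
  assume h: "has_strange_index E p \<and> has_strange_index E q"
  have finE: "finite E" using simplex(2) by (metis card.infinite add_is_0 one_neq_zero)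
  have "of_nat (card E) = aff_dim E + 1" using aff_dim_affine_independent[OF simplex(1)] .
  hence "aff_dim E = int DIM('a)" using simplex(2) by simp
  hence full: "affine hull E = UNIV" using aff_dim_eq_full by blast
  interpret sctx E using simplex(1) finE sum0 full by unfold_locales
  show False
    using main[OF EX _ pX qX disj] h good simplex(2) by auto
qed

end
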